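(* In the uncensored delayed-feedback bandit model (see context), let $a^*\in\{1,\dots,K\}$ satisfy $\theta_{a^*}\ge\theta_k$ for all $k$, and for any policy let $L(T)=\mathbb{E}[r^*(T)-r(T)]$. Then \[ L(T)=\sum_{s=1}^T\mathbb{E}[\theta_{a^*}-\theta_{A_s}]\,\tau_{T-s}, \] where $\tau_{T-s}=\mathbb{P}(D_s\le T-s)$. Moreover, with $N_k(T)=\sum_{s=1}^T\mathbf{1}\{A_s=k\}$, \[ L(T)\le\sum_{k=1}^K(\theta_{a^*}-\theta_k)\mathbb{E}[N_k(T)], \] and if $\mu=\mathbb{E}[D_s]<\infty$, \[ \sum_{k=1}^K(\theta_{a^*}-\theta_k)\mathbb{E}[N_k(T)]-L(T)\le\mu\sum_{k=1}^K(\theta_{a^*}-\theta_k). \]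
   Context: Uncensored delayed-feedback bandit model: $K$ arms with conversion rates $\theta_1,\dots,\theta_K\in[0,1]$; a delay distribution on $\mathbb{N}=\{0,1,\dots\}$ with CDF $\tau_d=\mathbb{P}(D\le d)$. At each round $t=1,2,\dots$ the learner picks $A_t\in\{1,\dots,K\}$ as a function of past observations; this triggers $C_t\in\{0,1\}$ and $D_t\in\mathbb{N}$, conditionally independent given the past, with $C_t\sim\mathrm{Bernoulli}(\theta_{A_t})$ and $D_t$ with CDF $\tau$. With $X_{s,t}=C_s\mathbf{1}\{D_s\le t-s\}$, at round $t$ the learner observes all $X_{s,t}$, $1\le s\le t$, and receives reward $Y_t=\sum_{s=1}^tC_s\mathbf{1}\{D_s=t-s\}$. $r(T)=\sum_{t=1}^TY_t$ is the learner's cumulated reward and $r^*(T)$ the cumulated reward of an oracle playing $A_t=a^*$ at every round. *)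

theory Defs
  imports "HOL-Probability.Probability"
begin

text \<open>A history of the first t rounds: list whose (s-1)-th entry is (A_s, C_s, D_s).\<close>
type_synonym hist = "(nat \<times> bool \<times> nat) list"

text \<open>Observations available after the rounds recorded in h (t = length h):
  for each past round s (0-indexed here), the played arm A_s and the list of
  observed values X_{s,u} = C_s * 1{D_s <= u - s} for u = s, ..., t.\<close>
definition obs :: "hist \<Rightarrow> (nat \<times> bool list) list" where
  "obs h = map (\<lambda>s. case h ! s of (a, c, d) \<Rightarrow>
              (a, map (\<lambda>u. c \<and> d \<le> u - s) [s..<length h])) [0..<length h]"

text \<open>Law of the history after t rounds under the (deterministic) policy pi, which maps
  past observations to an arm; C_t ~ Bernoulli(theta A_t) and D_t ~ Dl,
  conditionally independent given the past.\<close>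
fun run :: "(nat \<Rightarrow> real) \<Rightarrow> nat pmf \<Rightarrow> ((nat \<times> bool list) list \<Rightarrow> nat) \<Rightarrow> nat \<Rightarrow> hist pmf" where
  "run \<theta> Dl \<pi> 0 = return_pmf []"
| "run \<theta> Dl \<pi> (Suc t) =
     bind_pmf (run \<theta> Dl \<pi> t) (\<lambda>h.
       bind_pmf (bernoulli_pmf (\<theta> (\<pi> (obs h)))) (\<lambda>c.
         bind_pmf Dl (\<lambda>d. return_pmf (h @ [(\<pi> (obs h), c, d)]))))"

definition arm :: "hist \<Rightarrow> nat \<Rightarrow> nat" where
  "arm h s = fst (h ! (s - 1))"

definition Yrew :: "hist \<Rightarrow> nat \<Rightarrow> real" where
  "Yrew h t = (\<Sum>s = 1..t. case h ! (s - 1) of (a, c, d) \<Rightarrow>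
                  (if c then 1 else 0) * (if d = t - s then 1 else 0))"

definition cumrew :: "hist \<Rightarrow> nat \<Rightarrow> real" where
  "cumrew h T = (\<Sum>t = 1..T. Yrew h t)"

definition Ncount :: "hist \<Rightarrow> nat \<Rightarrow> nat \<Rightarrow> real" where
  "Ncount h k T = (\<Sum>s = 1..T. if arm h s = k then 1 else 0)"

definition tau :: "nat pmf \<Rightarrow> nat \<Rightarrow> real" where
  "tau Dl d = measure_pmf.prob Dl {..d}"

definition Lreg :: "(nat \<Rightarrow> real) \<Rightarrow> nat pmf \<Rightarrow> ((nat \<times> bool list) list \<Rightarrow> nat) \<Rightarrow> nat \<Rightarrow> nat \<Rightarrow> real" where
  "Lreg \<theta> Dl \<pi> astar T =
     measure_pmf.expectation (run \<theta> Dl (\<lambda>_. astar) T) (\<lambda>h. cumrew h T)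
   - measure_pmf.expectation (run \<theta> Dl \<pi> T) (\<lambda>h. cumrew h T)"

end

theory Submission
  imports Defs
begin

lemma exp_bind:
  fixes f :: "'b \<Rightarrow> real"
  assumes bd: "\<And>y. y \<in> set_pmf (bind_pmf M N) \<Longrightarrow> \<bar>f y\<bar> \<le> B"
  shows "measure_pmf.expectation (bind_pmf M N) f
       = measure_pmf.expectation M (\<lambda>x. measure_pmf.expectation (N x) f)"
proof -
  define g where "g y = max (-\<bar>B\<bar>) (min \<bar>B\<bar> (f y))" for y
  have fg: "f y = g y" if "y \<in> set_pmf (bind_pmf M N)" for y
    using bd[OF that] by (auto simp: g_def)
  have "measure_pmf.expectation (bind_pmf M N) f = measure_pmf.expectation (bind_pmf M N) g"
    by (rule integral_cong_AE) (auto intro!: AE_pmfI fg)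
  also have "\<dots> = measure_pmf.expectation M (\<lambda>x. measure_pmf.expectation (N x) g)"
    unfolding measure_pmf_bind
    by (rule integral_bind[where K="count_space UNIV" and B="\<bar>B\<bar>" and B'=1])
       (auto simp: g_def measure_pmf.subprob_measure_le_1 measure_pmf.emeasure_space_1 measure_pmf_in_subprob_algebra)
  also have "\<dots> = measure_pmf.expectation M (\<lambda>x. measure_pmf.expectation (N x) f)"
    by (rule integral_cong_AE) (auto intro!: AE_pmfI integral_cong_AE fg[symmetric])
  finally show ?thesis .
qed

lemma run_support:
  "h \<in> set_pmf (run \<theta> Dl p t) \<Longrightarrow> length h = t \<and> (\<forall>i<t. fst (h!i) \<in> range p)"
proof (induction t arbitrary: h)
  case 0 then show ?case by simp
next
  case (Suc t)
  then show ?case by (auto simp: nth_append less_Suc_eq)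
qed

lemma exp_run_Suc:
  fixes f :: "hist \<Rightarrow> real"
  assumes bd: "\<And>y. y \<in> set_pmf (run \<theta> Dl p (Suc t)) \<Longrightarrow> \<bar>f y\<bar> \<le> B"
    and th: "\<And>x. 0 \<le> \<theta> (p x) \<and> \<theta> (p x) \<le> 1"
  shows "measure_pmf.expectation (run \<theta> Dl p (Suc t)) f
    = measure_pmf.expectation (run \<theta> Dl p t) (\<lambda>h.
        \<theta> (p (obs h)) * measure_pmf.expectation Dl (\<lambda>d. f (h @ [(p (obs h), True, d)]))
      + (1 - \<theta> (p (obs h))) * measure_pmf.expectation Dl (\<lambda>d. f (h @ [(p (obs h), False, d)])))"
proof -
  let ?N = "\<lambda>h. bind_pmf (bernoulli_pmf (\<theta> (p (obs h)))) (\<lambda>c.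
         bind_pmf Dl (\<lambda>d. return_pmf (h @ [(p (obs h), c, d)])))"
  have "measure_pmf.expectation (run \<theta> Dl p (Suc t)) f
      = measure_pmf.expectation (run \<theta> Dl p t) (\<lambda>h. measure_pmf.expectation (?N h) f)"
    unfolding run.simps by (rule exp_bind[where B=B]) (use bd in simp)
  also have "\<dots> = measure_pmf.expectation (run \<theta> Dl p t) (\<lambda>h.
        \<theta> (p (obs h)) * measure_pmf.expectation Dl (\<lambda>d. f (h @ [(p (obs h), True, d)]))
      + (1 - \<theta> (p (obs h))) * measure_pmf.expectation Dl (\<lambda>d. f (h @ [(p (obs h), False, d)])))"
  proof (rule integral_cong_AE)
    show "AE h in measure_pmf (run \<theta> Dl p t). measure_pmf.expectation (?N h) f =
        \<theta> (p (obs h)) * measure_pmf.expectation Dl (\<lambda>d. f (h @ [(p (obs h), True, d)]))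
      + (1 - \<theta> (p (obs h))) * measure_pmf.expectation Dl (\<lambda>d. f (h @ [(p (obs h), False, d)]))"
    proof (rule AE_pmfI)
      fix h assume h: "h \<in> set_pmf (run \<theta> Dl p t)"
      have sub: "\<And>c d. c \<in> set_pmf (bernoulli_pmf (\<theta> (p (obs h)))) \<Longrightarrow> d \<in> set_pmf Dl \<Longrightarrow> \<bar>f (h @ [(p (obs h), c, d)])\<bar> \<le> B"
        by (rule bd) (use h in auto)
      have "measure_pmf.expectation (?N h) f = measure_pmf.expectation (bernoulli_pmf (\<theta> (p (obs h))))
           (\<lambda>c. measure_pmf.expectation (bind_pmf Dl (\<lambda>d. return_pmf (h @ [(p (obs h), c, d)]))) f)"
        by (rule exp_bind[where B=B]) (auto intro: sub)
      also have "\<dots> = measure_pmf.expectation (bernoulli_pmf (\<theta> (p (obs h))))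
           (\<lambda>c. measure_pmf.expectation Dl (\<lambda>d. f (h @ [(p (obs h), c, d)])))"
      proof (rule integral_cong_AE[OF _ _ AE_pmfI])
        fix c assume c: "c \<in> set_pmf (bernoulli_pmf (\<theta> (p (obs h))))"
        show "measure_pmf.expectation (bind_pmf Dl (\<lambda>d. return_pmf (h @ [(p (obs h), c, d)]))) f
            = measure_pmf.expectation Dl (\<lambda>d. f (h @ [(p (obs h), c, d)]))"
          by (subst exp_bind[where B=B]) (auto intro: sub c)
      qed simp_all
      also have "\<dots> = \<theta> (p (obs h)) * measure_pmf.expectation Dl (\<lambda>d. f (h @ [(p (obs h), True, d)]))
      + (1 - \<theta> (p (obs h))) * measure_pmf.expectation Dl (\<lambda>d. f (h @ [(p (obs h), False, d)]))"
        using th[of "obs h"] by (simp add: mult.commute)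
      finally show "measure_pmf.expectation (?N h) f =
        \<theta> (p (obs h)) * measure_pmf.expectation Dl (\<lambda>d. f (h @ [(p (obs h), True, d)]))
      + (1 - \<theta> (p (obs h))) * measure_pmf.expectation Dl (\<lambda>d. f (h @ [(p (obs h), False, d)]))" .
    qed
  qed simp_all
  finally show ?thesis .
qed

lemma map_take_run: "s \<le> t \<Longrightarrow> map_pmf (take s) (run \<theta> Dl p t) = run \<theta> Dl p s"
proof (induction t)
  case 0 then show ?case by simp
next
  case (Suc t)
  show ?case
  proof (cases "s = Suc t")
    case True
    have "map_pmf (take s) (run \<theta> Dl p (Suc t)) = map_pmf id (run \<theta> Dl p (Suc t))"
      by (rule map_pmf_cong) (use True run_support in auto)
    then show ?thesis using True by (simp add: pmf.map_id)
  next
    case False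
    then have st: "s \<le> t" using Suc.prems by simp
    have "map_pmf (take s) (run \<theta> Dl p (Suc t)) = map_pmf (take s) (run \<theta> Dl p t)"
      unfolding run.simps map_bind_pmf map_return_pmf map_pmf_def[symmetric]
      apply (simp add: map_pmf_def)
      apply (rule bind_pmf_cong[OF refl])
      subgoal for x
        using run_support[of x \<theta> Dl p t] st
        by (simp add: bind_assoc_pmf bind_return_pmf bind_pmf_const)
      done
    then show ?thesis using Suc.IH st by simp
  qed
qed

definition Xs :: "hist \<Rightarrow> nat \<Rightarrow> nat \<Rightarrow> real" where
  "Xs h T s = (case h ! (s - 1) of (a, c, d) \<Rightarrow>
                  (if c then 1 else 0) * (if d \<le> T - s then 1 else 0))"

lemma tau_exp: "tau Dl j = measure_pmf.expectation Dl (\<lambda>d. if d \<le> j then 1 else 0)"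
proof -
  have "(\<lambda>d. if d \<le> j then 1 else 0 :: real) = indicator {..j}"
    by (auto simp: indicator_def)
  then show ?thesis unfolding tau_def by simp
qed

lemma exp_take:
  fixes f :: "hist \<Rightarrow> real"
  assumes "s \<le> T" "\<And>h. f (take s h) = f h"
  shows "measure_pmf.expectation (run \<theta> Dl p T) f = measure_pmf.expectation (run \<theta> Dl p s) f"
proof -
  have "measure_pmf.expectation (run \<theta> Dl p T) f
      = measure_pmf.expectation (run \<theta> Dl p T) (\<lambda>h. f (take s h))" by (simp add: assms)
  also have "\<dots> = measure_pmf.expectation (map_pmf (take s) (run \<theta> Dl p T)) f" by simp
  finally show ?thesis using map_take_run[OF assms(1)] by simp
qed

lemma E_theta_arm:
  assumes th: "\<And>x. 0 \<le> \<theta> (p x) \<and> \<theta> (p x) \<le> 1" and sT: "Suc t \<le> T"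
  shows "measure_pmf.expectation (run \<theta> Dl p T) (\<lambda>h. \<theta> (arm h (Suc t)))
       = measure_pmf.expectation (run \<theta> Dl p t) (\<lambda>h. \<theta> (p (obs h)))"
proof -
  have "measure_pmf.expectation (run \<theta> Dl p T) (\<lambda>h. \<theta> (arm h (Suc t)))
      = measure_pmf.expectation (run \<theta> Dl p (Suc t)) (\<lambda>h. \<theta> (arm h (Suc t)))"
    by (rule exp_take[OF sT]) (simp add: arm_def)
  also have "\<dots> = measure_pmf.expectation (run \<theta> Dl p t) (\<lambda>h.
        \<theta> (p (obs h)) * measure_pmf.expectation Dl (\<lambda>d. \<theta> (arm (h @ [(p (obs h), True, d)]) (Suc t)))
      + (1 - \<theta> (p (obs h))) * measure_pmf.expectation Dl (\<lambda>d. \<theta> (arm (h @ [(p (obs h), False, d)]) (Suc t))))"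
  proof (rule exp_run_Suc[where B=1 and \<theta>=\<theta> and p=p])
    fix y assume "y \<in> set_pmf (run \<theta> Dl p (Suc t))"
    from run_support[OF this] obtain x where "arm y (Suc t) = p x" by (auto simp: arm_def)
    then show "\<bar>\<theta> (arm y (Suc t))\<bar> \<le> 1" using th[of x] by simp
  qed (rule th)
  also have "\<dots> = measure_pmf.expectation (run \<theta> Dl p t) (\<lambda>h. \<theta> (p (obs h)))"
  proof (rule integral_cong_AE[OF _ _ AE_pmfI])
    fix h assume "h \<in> set_pmf (run \<theta> Dl p t)"
    from run_support[OF this] have "length h = t" by simp
    then show "\<theta> (p (obs h)) * measure_pmf.expectation Dl (\<lambda>d. \<theta> (arm (h @ [(p (obs h), True, d)]) (Suc t)))
      + (1 - \<theta> (p (obs h))) * measure_pmf.expectation Dl (\<lambda>d. \<theta> (arm (h @ [(p (obs h), False, d)]) (Suc t)))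
      = \<theta> (p (obs h))"
      by (simp add: arm_def nth_append algebra_simps)
  qed simp_all
  finally show ?thesis .
qed

lemma E_X:
  assumes th: "\<And>x. 0 \<le> \<theta> (p x) \<and> \<theta> (p x) \<le> 1" and sT: "Suc t \<le> T"
  shows "measure_pmf.expectation (run \<theta> Dl p T) (\<lambda>h. Xs h T (Suc t))
       = measure_pmf.expectation (run \<theta> Dl p t) (\<lambda>h. \<theta> (p (obs h))) * tau Dl (T - Suc t)"
proof -
  have "measure_pmf.expectation (run \<theta> Dl p T) (\<lambda>h. Xs h T (Suc t))
      = measure_pmf.expectation (run \<theta> Dl p (Suc t)) (\<lambda>h. Xs h T (Suc t))"
    by (rule exp_take[OF sT]) (simp add: Xs_def)
  also have "\<dots> = measure_pmf.expectation (run \<theta> Dl p t) (\<lambda>h.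
        \<theta> (p (obs h)) * measure_pmf.expectation Dl (\<lambda>d. Xs (h @ [(p (obs h), True, d)]) T (Suc t))
      + (1 - \<theta> (p (obs h))) * measure_pmf.expectation Dl (\<lambda>d. Xs (h @ [(p (obs h), False, d)]) T (Suc t)))"
    by (rule exp_run_Suc[where B=1 and \<theta>=\<theta> and p=p]) (auto simp: Xs_def th split: prod.split)
  also have "\<dots> = measure_pmf.expectation (run \<theta> Dl p t) (\<lambda>h. \<theta> (p (obs h)) * tau Dl (T - Suc t))"
  proof (rule integral_cong_AE[OF _ _ AE_pmfI])
    fix h assume "h \<in> set_pmf (run \<theta> Dl p t)"
    from run_support[OF this] have "length h = t" by simp
    then show "\<theta> (p (obs h)) * measure_pmf.expectation Dl (\<lambda>d. Xs (h @ [(p (obs h), True, d)]) T (Suc t))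
      + (1 - \<theta> (p (obs h))) * measure_pmf.expectation Dl (\<lambda>d. Xs (h @ [(p (obs h), False, d)]) T (Suc t))
      = \<theta> (p (obs h)) * tau Dl (T - Suc t)"
      by (simp add: Xs_def nth_append tau_exp)
  qed simp_all
  finally show ?thesis by simp
qed

lemma int_bd:
  fixes f :: "'a \<Rightarrow> real"
  assumes "\<And>x. x \<in> set_pmf M \<Longrightarrow> \<bar>f x\<bar> \<le> B"
  shows "integrable (measure_pmf M) f"
  by (rule measure_pmf.integrable_const_bound[where B=B]) (auto intro!: AE_pmfI assms)

lemma Xs_Suc:
  assumes "s \<le> T"
  shows "Xs h (Suc T) s = Xs h T s + (case h ! (s - 1) of (a, c, d) \<Rightarrow>
                  (if c then 1 else 0) * (if d = Suc T - s then 1 else 0))"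
  using assms by (auto simp: Xs_def Suc_diff_le le_Suc_eq split: prod.split)

lemma cum: "cumrew h T = (\<Sum>s = 1..T. Xs h T s)"
proof (induction T)
  case 0 then show ?case by (simp add: cumrew_def)
next
  case (Suc T)
  have "cumrew h (Suc T) = cumrew h T + Yrew h (Suc T)"
    by (simp add: cumrew_def)
  also have "\<dots> = (\<Sum>s = 1..T. Xs h T s) + (\<Sum>s = 1..T. (case h ! (s - 1) of (a, c, d) \<Rightarrow>
                  (if c then 1 else 0) * (if d = Suc T - s then 1 else 0)))
         + Xs h (Suc T) (Suc T)"
    by (simp add: Suc Yrew_def Xs_def split: prod.split)
  also have "\<dots> = (\<Sum>s = 1..T. Xs h (Suc T) s) + Xs h (Suc T) (Suc T)"
    by (simp add: Xs_Suc sum.distrib)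
  also have "\<dots> = (\<Sum>s = 1..Suc T. Xs h (Suc T) s)" by simp
  finally show ?case .
qed

lemma ind_sum_bd: "\<bar>\<Sum>s = 1..T. (if P s then 1 else 0 :: real)\<bar> \<le> real T"
proof -
  have "0 \<le> (\<Sum>s = 1..T. (if P s then 1 else 0 :: real))" by (rule sum_nonneg) auto
  moreover have "(\<Sum>s = 1..T. (if P s then 1 else 0 :: real)) \<le> (\<Sum>s = 1..T. 1)" by (rule sum_mono) auto
  ultimately show ?thesis by simp
qed

lemma ind_sum_bd2: "\<bar>\<Sum>s = 1..T. (if P s then 0 else 1 :: real)\<bar> \<le> real T"
proof -
  have "(\<lambda>s. if P s then 0 else 1 :: real) = (\<lambda>s. if \<not> P s then 1 else 0)" by auto
  then show ?thesis using ind_sum_bd[of "\<lambda>s. \<not> P s" T] by (simp only:)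
qed

lemma card_tail:
  "(\<Sum>s = 1..T. (if d \<le> T - s then 0 else 1 :: real)) \<le> real d"
proof -
  have "(\<Sum>s = 1..T. (if d \<le> T - s then 0 else 1 :: real)) = real (card {s \<in> {1..T}. \<not> d \<le> T - s})"
    by (simp add: sum.If_cases Int_def)
  also have "card {s \<in> {1..T}. \<not> d \<le> T - s} \<le> card {Suc T - d..T}"
    by (rule card_mono) auto
  also have "card {Suc T - d..T} \<le> d" by simp
  finally show ?thesis by simp
qed

theorem lemma1:
  fixes K :: nat and \<theta> :: "nat \<Rightarrow> real" and Dl :: "nat pmf"
    and \<pi> :: "(nat \<times> bool list) list \<Rightarrow> nat" and astar :: nat and T :: nat
  assumes K: "K \<ge> 1"
    and theta01: "\<And>k. k \<in> {1..K} \<Longrightarrow> 0 \<le> \<theta> k \<and> \<theta> k \<le> 1"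
    and pol: "\<And>x. \<pi> x \<in> {1..K}"
    and astar: "astar \<in> {1..K}"
    and best: "\<And>k. k \<in> {1..K} \<Longrightarrow> \<theta> k \<le> \<theta> astar"
  shows "(Lreg \<theta> Dl \<pi> astar T =
           (\<Sum>s = 1..T. measure_pmf.expectation (run \<theta> Dl \<pi> T)
                           (\<lambda>h. \<theta> astar - \<theta> (arm h s)) * tau Dl (T - s)))
       \<and> (Lreg \<theta> Dl \<pi> astar T \<le>
           (\<Sum>k = 1..K. (\<theta> astar - \<theta> k) *
              measure_pmf.expectation (run \<theta> Dl \<pi> T) (\<lambda>h. Ncount h k T)))
       \<and> (integrable (measure_pmf Dl) real \<longrightarrow>
         (\<Sum>k = 1..K. (\<theta> astar - \<theta> k) *
              measure_pmf.expectation (run \<theta> Dl \<pi> T) (\<lambda>h. Ncount h k T))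
           - Lreg \<theta> Dl \<pi> astar T
         \<le> measure_pmf.expectation Dl real * (\<Sum>k = 1..K. (\<theta> astar - \<theta> k)))"
proof -
  let ?R = "run \<theta> Dl \<pi> T"
  let ?O = "run \<theta> Dl (\<lambda>_. astar) T"
  have thp: "\<And>x. 0 \<le> \<theta> (\<pi> x) \<and> \<theta> (\<pi> x) \<le> 1" using pol theta01 by blast
  have tho: "\<And>x. 0 \<le> \<theta> ((\<lambda>_. astar) x) \<and> \<theta> ((\<lambda>_. astar) x) \<le> 1" using astar theta01 by simp
  have armK: "arm h s \<in> {1..K}" if "h \<in> set_pmf ?R" "s \<in> {1..T}" for h s
  proof -
    from run_support[OF that(1)] that(2) have "fst (h ! (s - 1)) \<in> range \<pi>" by auto
    then show ?thesis using pol by (auto simp: arm_def)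
  qed
  define e where "e s = measure_pmf.expectation ?R (\<lambda>h. \<theta> (arm h s))" for s
  define M where "M = (\<Sum>k = 1..K. \<theta> astar - \<theta> k)"
  have M0: "0 \<le> M" unfolding M_def by (rule sum_nonneg) (use best in auto)
  have intX: "integrable (measure_pmf (run \<theta> Dl p T)) (\<lambda>h. Xs h T s)" for p s
    by (rule int_bd[where B=1]) (auto simp: Xs_def split: prod.split)
  have intA: "integrable (measure_pmf ?R) (\<lambda>h. \<theta> (arm h s))" if "s \<in> {1..T}" for s
    by (rule int_bd[where B=1]) (use armK[OF _ that] theta01 in fastforce)
  have EXg: "measure_pmf.expectation (run \<theta> Dl p T) (\<lambda>h. Xs h T s)
      = measure_pmf.expectation (run \<theta> Dl p T) (\<lambda>h. \<theta> (arm h s)) * tau Dl (T - s)"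
    if th: "\<And>x. 0 \<le> \<theta> (p x) \<and> \<theta> (p x) \<le> 1" and s: "s \<in> {1..T}" for p s
  proof -
    obtain t where t: "s = Suc t" using s by (cases s) auto
    show ?thesis unfolding t using E_X[where \<theta>=\<theta> and p=p and Dl=Dl and t=t and T=T] E_theta_arm[where \<theta>=\<theta> and p=p and Dl=Dl and t=t and T=T] th s t by simp
  qed
  have Eo: "measure_pmf.expectation ?O (\<lambda>h. \<theta> (arm h s)) = \<theta> astar" if s: "s \<in> {1..T}" for s
  proof -
    obtain t where t: "s = Suc t" using s by (cases s) auto
    show ?thesis unfolding t using E_theta_arm[where \<theta>=\<theta> and p="\<lambda>_. astar" and Dl=Dl and t=t and T=T] tho s t by simp
  qed
  have cumE: "measure_pmf.expectation (run \<theta> Dl p T) (\<lambda>h. cumrew h T)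
      = (\<Sum>s = 1..T. measure_pmf.expectation (run \<theta> Dl p T) (\<lambda>h. Xs h T s))" for p
  proof -
    have "measure_pmf.expectation (run \<theta> Dl p T) (\<lambda>h. \<Sum>s\<in>{1..T}. (\<lambda>s h. Xs h T s) s h)
        = (\<Sum>s\<in>{1..T}. measure_pmf.expectation (run \<theta> Dl p T) ((\<lambda>s h. Xs h T s) s))"
      by (rule Bochner_Integration.integral_sum) (rule intX)
    then show ?thesis unfolding cum by simp
  qed
  have EXp: "measure_pmf.expectation ?R (\<lambda>h. Xs h T s)
      = measure_pmf.expectation ?R (\<lambda>h. \<theta> (arm h s)) * tau Dl (T - s)" if "s \<in> {1..T}" for s
    by (rule EXg) (rule thp, rule that)
  have EXo: "measure_pmf.expectation ?O (\<lambda>h. Xs h T s)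
      = measure_pmf.expectation ?O (\<lambda>h. \<theta> (arm h s)) * tau Dl (T - s)" if "s \<in> {1..T}" for s
    by (rule EXg) (rule tho, rule that)
  have L1: "Lreg \<theta> Dl \<pi> astar T = (\<Sum>s = 1..T. (\<theta> astar - e s) * tau Dl (T - s))"
  proof -
    have "Lreg \<theta> Dl \<pi> astar T = (\<Sum>s = 1..T. \<theta> astar * tau Dl (T - s)) - (\<Sum>s = 1..T. e s * tau Dl (T - s))"
      unfolding Lreg_def cumE e_def
      using EXp EXo by (simp add: Eo)
    then show ?thesis by (simp add: sum_subtractf left_diff_distrib)
  qed
  have Ediff: "measure_pmf.expectation ?R (\<lambda>h. \<theta> astar - \<theta> (arm h s)) = \<theta> astar - e s"
    if "s \<in> {1..T}" for s
    using intA[OF that] by (simp add: e_def)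
  have e_nonneg: "0 \<le> \<theta> astar - e s" if s: "s \<in> {1..T}" for s
    unfolding Ediff[OF s, symmetric]
    by (rule integral_nonneg_AE) (auto intro!: AE_pmfI best armK[OF _ s])
  have e_le: "\<theta> astar - e s \<le> M" if s: "s \<in> {1..T}" for s
  proof -
    have "measure_pmf.expectation ?R (\<lambda>h. \<theta> astar - \<theta> (arm h s)) \<le> measure_pmf.expectation ?R (\<lambda>h. M)"
    proof (rule integral_mono_AE)
      show "integrable (measure_pmf ?R) (\<lambda>h. \<theta> astar - \<theta> (arm h s))"
        using intA[OF s] by simp
      show "AE h in measure_pmf ?R. \<theta> astar - \<theta> (arm h s) \<le> M"
      proof (rule AE_pmfI)
        fix h assume "h \<in> set_pmf ?R"
        then have "arm h s \<in> {1..K}" using armK s by blast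
        then show "\<theta> astar - \<theta> (arm h s) \<le> M" unfolding M_def
          by (rule member_le_sum[where f="\<lambda>k. \<theta> astar - \<theta> k"]) (use best in auto)
      qed
    qed simp
    then show ?thesis using Ediff[OF s] by simp
  qed
  have intN: "integrable (measure_pmf ?R) (\<lambda>h. Ncount h k T)" for k
    unfolding Ncount_def by (rule int_bd[where B="real T"], rule ind_sum_bd)
  have D: "(\<Sum>k = 1..K. (\<theta> astar - \<theta> k) * measure_pmf.expectation ?R (\<lambda>h. Ncount h k T))
      = (\<Sum>s = 1..T. \<theta> astar - e s)"
  proof -
    have "(\<Sum>k = 1..K. (\<theta> astar - \<theta> k) * measure_pmf.expectation ?R (\<lambda>h. Ncount h k T))
       = (\<Sum>k = 1..K. measure_pmf.expectation ?R (\<lambda>h. (\<theta> astar - \<theta> k) * Ncount h k T))"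
      by simp
    also have "\<dots> = measure_pmf.expectation ?R (\<lambda>h. \<Sum>k = 1..K. (\<theta> astar - \<theta> k) * Ncount h k T)"
      by (rule Bochner_Integration.integral_sum[symmetric]) (use intN in simp)
    also have "\<dots> = measure_pmf.expectation ?R (\<lambda>h. \<Sum>s = 1..T. \<theta> astar - \<theta> (arm h s))"
    proof (rule integral_cong_AE[OF _ _ AE_pmfI])
      fix h assume h: "h \<in> set_pmf ?R"
      have "(\<Sum>k = 1..K. (\<theta> astar - \<theta> k) * Ncount h k T)
          = (\<Sum>k = 1..K. \<Sum>s = 1..T. if arm h s = k then \<theta> astar - \<theta> k else 0)"
        by (simp add: Ncount_def sum_distrib_left if_distrib cong: if_cong)
      also have "\<dots> = (\<Sum>s = 1..T. \<Sum>k = 1..K. if arm h s = k then \<theta> astar - \<theta> k else 0)"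
        by (rule sum.swap)
      also have "\<dots> = (\<Sum>s = 1..T. \<theta> astar - \<theta> (arm h s))"
        by (rule sum.cong[OF refl]) (use armK[OF h] in simp)
      finally show "(\<Sum>k = 1..K. (\<theta> astar - \<theta> k) * Ncount h k T) = (\<Sum>s = 1..T. \<theta> astar - \<theta> (arm h s))" .
    qed simp_all
    also have "\<dots> = (\<Sum>s = 1..T. measure_pmf.expectation ?R (\<lambda>h. \<theta> astar - \<theta> (arm h s)))"
      by (rule Bochner_Integration.integral_sum) (use intA in simp)
    also have "\<dots> = (\<Sum>s = 1..T. \<theta> astar - e s)"
      by (rule sum.cong[OF refl]) (rule Ediff)
    finally show ?thesis .
  qed
  have tau_le: "tau Dl j \<le> 1" for j unfolding tau_def by simp
  have tau_ge: "0 \<le> tau Dl j" for j unfolding tau_def by simp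
  have part2: "Lreg \<theta> Dl \<pi> astar T \<le> (\<Sum>s = 1..T. \<theta> astar - e s)"
    unfolding L1 by (rule sum_mono) (use e_nonneg tau_le in \<open>simp add: mult_left_le\<close>)
  have tail: "(\<Sum>s = 1..T. 1 - tau Dl (T - s)) \<le> measure_pmf.expectation Dl real"
    if intD: "integrable (measure_pmf Dl) real"
  proof -
    have intI: "integrable (measure_pmf Dl) (\<lambda>d. if d \<le> j then 1 else 0 :: real)" for j
      by (rule int_bd[where B=1]) auto
    have one: "1 - tau Dl j = measure_pmf.expectation Dl (\<lambda>d. if d \<le> j then 0 else 1)" for j
    proof -
      have "(\<lambda>d. if d \<le> j then 0 else 1 :: real) = (\<lambda>d. 1 - (if d \<le> j then 1 else 0))" by auto
      then show ?thesis using intI[of j] by (simp add: tau_exp)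
    qed
    have "(\<Sum>s = 1..T. 1 - tau Dl (T - s))
        = measure_pmf.expectation Dl (\<lambda>d. \<Sum>s = 1..T. if d \<le> T - s then 0 else 1)"
      unfolding one by (rule Bochner_Integration.integral_sum[symmetric]) (rule int_bd[where B=1], auto)
    also have "\<dots> \<le> measure_pmf.expectation Dl real"
    proof (rule integral_mono[OF _ intD])
      show "integrable (measure_pmf Dl) (\<lambda>d. \<Sum>s = 1..T. if d \<le> T - s then 0 else 1 :: real)"
        by (rule int_bd[where B="real T"], rule ind_sum_bd2)
      show "(\<Sum>s = 1..T. if d \<le> T - s then 0 else 1 :: real) \<le> real d" for d
        by (rule card_tail)
    qed
    finally show ?thesis .
  qed
  show ?thesis
  proof (intro conjI impI)
    show "Lreg \<theta> Dl \<pi> astar T = (\<Sum>s = 1..T. measure_pmf.expectation ?R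
                           (\<lambda>h. \<theta> astar - \<theta> (arm h s)) * tau Dl (T - s))"
      unfolding L1 by (rule sum.cong[OF refl]) (simp add: Ediff)
    show "Lreg \<theta> Dl \<pi> astar T \<le> (\<Sum>k = 1..K. (\<theta> astar - \<theta> k) *
              measure_pmf.expectation ?R (\<lambda>h. Ncount h k T))"
      unfolding D by (rule part2)
    assume intD: "integrable (measure_pmf Dl) real"
    have "(\<Sum>k = 1..K. (\<theta> astar - \<theta> k) * measure_pmf.expectation ?R (\<lambda>h. Ncount h k T))
           - Lreg \<theta> Dl \<pi> astar T = (\<Sum>s = 1..T. (\<theta> astar - e s) * (1 - tau Dl (T - s)))"
      unfolding D L1 by (simp add: sum_subtractf[symmetric] algebra_simps)
    also have "\<dots> \<le> (\<Sum>s = 1..T. M * (1 - tau Dl (T - s)))"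
      by (rule sum_mono) (use e_le tau_le in \<open>simp add: mult_right_mono\<close>)
    also have "\<dots> = M * (\<Sum>s = 1..T. 1 - tau Dl (T - s))" by (simp add: sum_distrib_left)
    also have "\<dots> \<le> M * measure_pmf.expectation Dl real"
      by (rule mult_left_mono[OF tail[OF intD] M0])
    finally show "(\<Sum>k = 1..K. (\<theta> astar - \<theta> k) * measure_pmf.expectation ?R (\<lambda>h. Ncount h k T))
           - Lreg \<theta> Dl \<pi> astar T \<le> measure_pmf.expectation Dl real * (\<Sum>k = 1..K. \<theta> astar - \<theta> k)"
      by (simp add: M_def mult.commute)
  qed
qed

end
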